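(* Let $\tilde f(\omega)$ be an even function with $\tilde f(0)=0$ and $\tilde f(\omega)=1$ for $|\omega|\ge1$, let $f(t)$ be its (inverse) Fourier transform, and define $F(t)=\frac{i}{2}\int du\, f(u)\,{\rm sign}(t-u)$, where ${\rm sign}(x)=1$ for $x>0$, $-1$ for $x<0$, and ${\rm sign}(0)=0$. Let $\tilde F(\omega)$ be the Fourier transform of $F$. Then $$|F(t)|\le\Bigl|\int_{|t|}^\infty f(u)\,du\Bigr|\qquad\text{and}\qquad \tilde F(\omega)=-\frac1\omega\tilde f(\omega).$$
   Context: Fourier conventions: $\tilde h(\omega)=\int dt\,e^{i\omega t}h(t)$. The typical case is $f(t)=\delta(t)-g(t)$ with $g$ an even, rapidly decaying function whose Fourier transform equals $1$ at $\omega=0$ and $0$ for $|\omega|\ge1$; the convolution with the sign function makes $F$ an ordinary function. *)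

theory Defs
  imports "HOL-Analysis.Analysis"
begin

definition FT :: "(real \<Rightarrow> complex) \<Rightarrow> real \<Rightarrow> complex" where
  "FT h w = (LINT t|lborel. exp (\<i> * complex_of_real (w * t)) * h t)"

text \<open>The distribution f = delta - g, with g an ordinary function.
  Its Fourier transform is 1 - FT g.\<close>
definition f_hat :: "(real \<Rightarrow> complex) \<Rightarrow> real \<Rightarrow> complex" where
  "f_hat g w = 1 - FT g w"

text \<open>F(t) = (i/2) int f(u) sign(t-u) du, where the delta part contributes sign t.\<close>
definition F_of :: "(real \<Rightarrow> complex) \<Rightarrow> real \<Rightarrow> complex" where
  "F_of g t = (\<i> / 2) * (complex_of_real (sgn t)
                 - (LINT u|lborel. g u * complex_of_real (sgn (t - u))))"

text \<open>The tail integral of f from |t| to infinity. For t nonzero the delta does not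
  contribute; at t = 0 we use the symmetric convention (delta contributes 1/2),
  consistent with sign 0 = 0.\<close>
definition f_tail :: "(real \<Rightarrow> complex) \<Rightarrow> real \<Rightarrow> complex" where
  "f_tail g t = (if t = 0 then 1/2 else 0) - (LINT u:{\<bar>t\<bar>..}|lborel. g u)"

end

theory Submission
  imports Defs "HOL-Probability.Probability"
begin

lemma levy_real_unique:
  fixes p q :: "real \<Rightarrow> real"
  assumes pn: "\<And>x. 0 \<le> p x" and qn: "\<And>x. 0 \<le> q x"
    and ip: "integrable lborel p" and iq: "integrable lborel q"
    and ft: "\<And>w. (LINT x|lborel. of_real (p x) * exp (\<i> * complex_of_real (w * x)))
               = (LINT x|lborel. of_real (q x) * exp (\<i> * complex_of_real (w * x)))"
  shows "(LINT x|lborel. indicator {..t} x * p x) = (LINT x|lborel. indicator {..t} x * q x)"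
proof -
  have pm[measurable]: "p \<in> borel_measurable borel" using ip by auto
  have qm[measurable]: "q \<in> borel_measurable borel" using iq by auto
  have c0: "(LINT x|lborel. p x) = (LINT x|lborel. q x)"
    using ft[of 0] by simp
  define c where "c = (LINT x|lborel. p x)"
  have cn: "0 \<le> c" unfolding c_def using pn by simp
  show ?thesis
  proof (cases "c = 0")
    case True
    have "AE x in lborel. p x = 0" using True ip pn integral_nonneg_eq_0_iff_AE[of lborel p]
      unfolding c_def by auto
    then have 1: "(LINT x|lborel. indicator {..t} x * p x) = 0"
      by (subst integral_cong_AE[where g="\<lambda>_. 0"]) auto
    have "AE x in lborel. q x = 0" using True c0 iq qn integral_nonneg_eq_0_iff_AE[of lborel q]
      unfolding c_def by auto
    then have 2: "(LINT x|lborel. indicator {..t} x * q x) = 0"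
      by (subst integral_cong_AE[where g="\<lambda>_. 0"]) auto
    show ?thesis using 1 2 by simp
  next
    case False
    then have cp: "0 < c" using cn by simp
    define M1 where "M1 = density lborel (\<lambda>x. ennreal (p x / c))"
    define M2 where "M2 = density lborel (\<lambda>x. ennreal (q x / c))"
    have d1: "real_distribution M1"
      unfolding real_distribution_def real_distribution_axioms_def
    proof
      show "prob_space M1"
      proof
        have "emeasure M1 (space M1) = (\<integral>\<^sup>+ x. ennreal (p x / c) \<partial>lborel)"
          unfolding M1_def by (simp add: emeasure_density)
        also have "\<dots> = ennreal (LINT x|lborel. p x / c)"
          using ip pn cn by (intro nn_integral_eq_integral) auto
        also have "\<dots> = 1" using cp unfolding c_def by simp
        finally show "emeasure M1 (space M1) = 1" .
      qed
      show "sets M1 = sets borel" unfolding M1_def by simp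
    qed
    have d2: "real_distribution M2"
      unfolding real_distribution_def real_distribution_axioms_def
    proof
      show "prob_space M2"
      proof
        have "emeasure M2 (space M2) = (\<integral>\<^sup>+ x. ennreal (q x / c) \<partial>lborel)"
          unfolding M2_def by (simp add: emeasure_density)
        also have "\<dots> = ennreal (LINT x|lborel. q x / c)"
          using iq qn cn by (intro nn_integral_eq_integral) auto
        also have "\<dots> = 1" using cp c0 unfolding c_def by simp
        finally show "emeasure M2 (space M2) = 1" .
      qed
      show "sets M2 = sets borel" unfolding M2_def by simp
    qed
    have ch1: "char M1 w = (LINT x|lborel. of_real (p x) * exp (\<i> * complex_of_real (w * x))) / c" for w
      unfolding char_def M1_def using cn pn
      by (subst integral_density) (auto simp: scaleR_conv_of_real)
    have ch2: "char M2 w = (LINT x|lborel. of_real (q x) * exp (\<i> * complex_of_real (w * x))) / c" for w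
      unfolding char_def M2_def using cn qn
      by (subst integral_density) (auto simp: scaleR_conv_of_real)
    have "M1 = M2" using d1 d2 ch1 ch2 ft by (intro Levy_uniqueness) auto
    then have "(LINT x|M1. indicator {..t} x) = (LINT x|M2. indicator {..t} x :: real)" by simp
    then have "(LINT x|lborel. (p x / c) * indicator {..t} x) = (LINT x|lborel. (q x / c) * indicator {..t} x)"
      unfolding M1_def M2_def using cn pn qn by (subst (asm) (1 2) integral_density) auto
    then show ?thesis using cp by (simp add: mult.commute)
  qed
qed

abbreviation E :: "real \<Rightarrow> complex" where "E x \<equiv> exp (\<i> * complex_of_real x)"

lemma norm_E[simp]: "norm (E x) = 1"
  by (simp add: norm_exp_i_times)

lemma integrable_E_mult:
  fixes g :: "real \<Rightarrow> complex"
  assumes "integrable lborel g"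
  shows "integrable lborel (\<lambda>x. g x * E (w * x))"
proof (rule Bochner_Integration.integrable_bound[OF integrable_norm[OF assms]])
  show "(\<lambda>x. g x * E (w * x)) \<in> borel_measurable lborel" using assms by measurable
  show "AE x in lborel. norm (g x * E (w * x)) \<le> norm (norm (g x))"
    by (simp add: norm_mult)
qed

lemma levy_real_signed:
  fixes a b :: "real \<Rightarrow> real"
  assumes ia: "integrable lborel a" and ib: "integrable lborel b"
    and ft: "\<And>w. (LINT x|lborel. of_real (a x) * E (w * x))
               = (LINT x|lborel. of_real (b x) * E (w * x))"
  shows "(LINT x|lborel. indicator {..t} x * a x) = (LINT x|lborel. indicator {..t} x * b x)"
proof -
  define p where "p x = max (a x) 0 + max (- b x) 0" for x
  define q where "q x = max (b x) 0 + max (- a x) 0" for x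
  have pq: "p x - q x = a x - b x" for x unfolding p_def q_def by auto
  have ip: "integrable lborel p" unfolding p_def using ia ib by auto
  have iq: "integrable lborel q" unfolding q_def using ia ib by auto
  have ipc: "integrable lborel (\<lambda>x. of_real (p x) :: complex)" using ip by simp
  have iqc: "integrable lborel (\<lambda>x. of_real (q x) :: complex)" using iq by simp
  have iac: "integrable lborel (\<lambda>x. of_real (a x) :: complex)" using ia by simp
  have ibc: "integrable lborel (\<lambda>x. of_real (b x) :: complex)" using ib by simp
  have "(LINT x|lborel. of_real (p x) * E (w * x)) = (LINT x|lborel. of_real (q x) * E (w * x))" for w
  proof -
    have "(LINT x|lborel. of_real (p x) * E (w * x)) - (LINT x|lborel. of_real (q x) * E (w * x))
        = (LINT x|lborel. of_real (p x) * E (w * x) - of_real (q x) * E (w * x))"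
      using integrable_E_mult[OF ipc] integrable_E_mult[OF iqc] by simp
    also have "\<dots> = (LINT x|lborel. of_real (a x) * E (w * x) - of_real (b x) * E (w * x))"
    proof (rule Bochner_Integration.integral_cong[OF refl])
      fix x
      have "complex_of_real (p x) - of_real (q x) = of_real (a x) - of_real (b x)"
        using pq[of x] by (metis of_real_diff)
      then show "of_real (p x) * E (w * x) - of_real (q x) * E (w * x)
            = of_real (a x) * E (w * x) - of_real (b x) * E (w * x)"
        by (metis left_diff_distrib)
    qed
    also have "\<dots> = (LINT x|lborel. of_real (a x) * E (w * x)) - (LINT x|lborel. of_real (b x) * E (w * x))"
      using integrable_E_mult[OF iac] integrable_E_mult[OF ibc] by simp
    also have "\<dots> = 0" using ft[of w] by simp
    finally show ?thesis by simp
  qed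
  then have "(LINT x|lborel. indicator {..t} x * p x) = (LINT x|lborel. indicator {..t} x * q x)"
    by (intro levy_real_unique ip iq) (auto simp: p_def q_def)
  moreover have "(LINT x|lborel. indicator {..t} x * p x) - (LINT x|lborel. indicator {..t} x * q x)
      = (LINT x|lborel. indicator {..t} x * a x) - (LINT x|lborel. indicator {..t} x * b x)"
  proof -
    have i1: "integrable lborel (\<lambda>x. indicator {..t} x * f x)" if "integrable lborel f" for f :: "real \<Rightarrow> real"
      using integrable_mult_indicator[of "{..t}" lborel f] that by (simp add: mult.commute)
    have "(LINT x|lborel. indicator {..t} x * p x) - (LINT x|lborel. indicator {..t} x * q x)
        = (LINT x|lborel. indicator {..t} x * p x - indicator {..t} x * q x)"
      using i1[OF ip] i1[OF iq] by simp
    also have "\<dots> = (LINT x|lborel. indicator {..t} x * a x - indicator {..t} x * b x)"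
      by (rule Bochner_Integration.integral_cong[OF refl]) (metis pq right_diff_distrib)
    also have "\<dots> = (LINT x|lborel. indicator {..t} x * a x) - (LINT x|lborel. indicator {..t} x * b x)"
      using i1[OF ia] i1[OF ib] by simp
    finally show ?thesis .
  qed
  ultimately show ?thesis by simp
qed

lemma FT_Re:
  fixes g :: "real \<Rightarrow> complex"
  assumes ig: "integrable lborel g"
  shows "(LINT x|lborel. of_real (Re (g x)) * E (w * x))
       = ((LINT x|lborel. g x * E (w * x)) + cnj (LINT x|lborel. g x * E ((-w) * x))) / 2"
proof -
  have "(LINT x|lborel. of_real (Re (g x)) * E (w * x))
      = (LINT x|lborel. (g x * E (w * x) + cnj (g x * E ((-w) * x))) / 2)"
  proof (rule Bochner_Integration.integral_cong[OF refl])
    fix x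
    have "cnj (E ((-w) * x)) = E (w * x)"
      by (simp add: exp_cnj)
    moreover have "g x + cnj (g x) = 2 * of_real (Re (g x))" by (simp add: complex_add_cnj)
    ultimately show "of_real (Re (g x)) * E (w * x) = (g x * E (w * x) + cnj (g x * E ((-w) * x))) / 2"
      by (simp add: distrib_right[symmetric])
  qed
  also have "\<dots> = (LINT x|lborel. (g x * E (w * x) + cnj (g x * E ((-w) * x)))) / 2"
    by (rule integral_divide_zero)
  also have "(LINT x|lborel. (g x * E (w * x) + cnj (g x * E ((-w) * x))))
     = (LINT x|lborel. g x * E (w * x)) + (LINT x|lborel. cnj (g x * E ((-w) * x)))"
    by (rule Bochner_Integration.integral_add)
      (use integrable_E_mult[OF ig, of w] integrable_E_mult[OF ig, of "-w"] in \<open>auto intro: integrable_cnj simp del: complex_cnj_mult\<close>)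
  also have "(LINT x|lborel. cnj (g x * E ((-w) * x))) = cnj (LINT x|lborel. g x * E ((-w) * x))"
    by (rule Bochner_Integration.integral_cnj)
  finally show ?thesis .
qed

lemma fourier_unique_cdf:
  fixes g h :: "real \<Rightarrow> complex"
  assumes ig: "integrable lborel g" and ih: "integrable lborel h"
    and ft: "\<And>w. (LINT x|lborel. g x * E (w * x)) = (LINT x|lborel. h x * E (w * x))"
  shows "(LINT x|lborel. indicator {..t} x * g x) = (LINT x|lborel. indicator {..t} x * h x)"
proof -
  have re: "(LINT x|lborel. indicator {..t} x * Re (g x)) = (LINT x|lborel. indicator {..t} x * Re (h x))"
    if ig: "integrable lborel g" and ih: "integrable lborel h"
    and ft: "\<And>w. (LINT x|lborel. g x * E (w * x)) = (LINT x|lborel. h x * E (w * x))"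
    for g h :: "real \<Rightarrow> complex"
  proof (rule levy_real_signed)
    show "integrable lborel (\<lambda>x. Re (g x))" using ig by simp
    show "integrable lborel (\<lambda>x. Re (h x))" using ih by simp
    fix w
    show "(LINT x|lborel. of_real (Re (g x)) * E (w * x)) = (LINT x|lborel. of_real (Re (h x)) * E (w * x))"
      by (simp only: FT_Re[OF ig] FT_Re[OF ih] ft)
  qed
  have 1: "(LINT x|lborel. indicator {..t} x * Re (g x)) = (LINT x|lborel. indicator {..t} x * Re (h x))"
    using re[OF ig ih ft] .
  have ig': "integrable lborel (\<lambda>x. - \<i> * g x)" using ig by simp
  have ih': "integrable lborel (\<lambda>x. - \<i> * h x)" using ih by simp
  have ft': "(LINT x|lborel. (- \<i> * g x) * E (w * x)) = (LINT x|lborel. (- \<i> * h x) * E (w * x))" for w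
    using ft[of w] by (simp add: mult.assoc)
  have 2: "(LINT x|lborel. indicator {..t} x * Im (g x)) = (LINT x|lborel. indicator {..t} x * Im (h x))"
    using re[OF ig' ih' ft'] by simp
  have indc: "\<And>f. (\<lambda>x. indicator {..t} x * f x) = (\<lambda>x. complex_of_real (indicator {..t} x) * f x)"
    by (auto simp: indicator_def)
  have ig2: "integrable lborel (\<lambda>x. indicator {..t} x * g x)"
    using integrable_mult_indicator[of "{..t}" lborel g] ig by (simp add: scaleR_conv_of_real indc)
  have ih2: "integrable lborel (\<lambda>x. indicator {..t} x * h x)"
    using integrable_mult_indicator[of "{..t}" lborel h] ih by (simp add: scaleR_conv_of_real indc)
  show ?thesis
  proof (rule complex_eqI)
    show "Re (LINT x|lborel. indicator {..t} x * g x) = Re (LINT x|lborel. indicator {..t} x * h x)"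
      using 1 ig2 ih2 by (simp add: indc integral_Re[symmetric] del: integral_Re)
    show "Im (LINT x|lborel. indicator {..t} x * g x) = Im (LINT x|lborel. indicator {..t} x * h x)"
      using 2 ig2 ih2 by (simp add: indc integral_Im[symmetric] del: integral_Im)
  qed
qed

lemma integrable_inv_sq: "integrable lborel (\<lambda>x::real. inverse (1 + x^2))"
proof -
  have "set_integrable lborel (einterval (-\<infinity>) \<infinity>) (\<lambda>x::real. inverse (1 + x^2))"
    by (rule integrable_inverse_1_plus_square)
  moreover have "einterval (-\<infinity>) \<infinity> = (UNIV::real set)" by (auto simp: einterval_iff)
  ultimately show ?thesis by (simp add: set_integrable_def)
qed

lemma integrable_by_decay:
  fixes h :: "real \<Rightarrow> complex"
  assumes cont: "continuous_on UNIV h"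
    and b0: "\<And>t. norm (h t) \<le> C0" and b2: "\<And>t. \<bar>t\<bar>^2 * norm (h t) \<le> C2"
  shows "integrable lborel h"
proof (rule Bochner_Integration.integrable_bound[where f="\<lambda>x. (C0 + C2) * inverse (1 + x^2)"])
  show "integrable lborel (\<lambda>x. (C0 + C2) * inverse (1 + x^2))"
    using integrable_inv_sq by simp
  show "h \<in> borel_measurable lborel"
    using cont by (simp add: borel_measurable_continuous_onI)
  show "AE x in lborel. norm (h x) \<le> norm ((C0 + C2) * inverse (1 + x^2))"
  proof (rule AE_I2)
    fix x :: real
    have "(1 + x^2) * norm (h x) \<le> C0 + C2" using b0[of x] b2[of x] by (simp add: algebra_simps)
    moreover have "0 < 1 + x^2" by (simp add: add_pos_nonneg)
    ultimately have "norm (h x) \<le> (C0 + C2) * inverse (1 + x^2)"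
      by (simp add: field_simps)
    then show "norm (h x) \<le> norm ((C0 + C2) * inverse (1 + x^2))" by simp
  qed
qed

definition K :: "real \<Rightarrow> real \<Rightarrow> real" where
  "K t u = (sgn t - sgn (t - u)) / 2"

lemma K_measurable[measurable]: "(\<lambda>(u, t). K t u) \<in> borel_measurable (borel \<Otimes>\<^sub>M borel)"
  unfolding K_def by measurable

lemma K_ae: "AE t in lborel. K t u = indicator {0<..<u} t - indicator {u<..<0} t"
proof -
  have "AE t in lborel. t \<noteq> 0" by (rule AE_lborel_singleton)
  moreover have "AE t in lborel. t \<noteq> u" by (rule AE_lborel_singleton)
  ultimately show ?thesis
    by eventually_elim (auto simp: K_def indicator_def sgn_if)
qed

lemma K_abs_ae: "AE t in lborel. \<bar>K t u\<bar> = indicator {0<..<u} t + indicator {u<..<0} t"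
proof -
  have "AE t in lborel. t \<noteq> 0" by (rule AE_lborel_singleton)
  moreover have "AE t in lborel. t \<noteq> u" by (rule AE_lborel_singleton)
  ultimately show ?thesis
    by eventually_elim (auto simp: K_def indicator_def sgn_if)
qed

lemma emeasure_Ioo_fin[simp]: "emeasure lborel {a<..<b::real} < \<top>"
  by (cases "a \<le> b") auto

lemma K_abs_int: "integrable lborel (\<lambda>t. \<bar>K t u\<bar>) \<and> (LINT t|lborel. \<bar>K t u\<bar>) = \<bar>u\<bar>"
proof -
  have i: "integrable lborel (\<lambda>t. indicator {0<..<u} t + indicator {u<..<0} t :: real)"
    by (intro Bochner_Integration.integrable_add integrable_real_indicator) (cases "0 \<le> u"; simp)+
  have m: "(\<lambda>t. \<bar>K t u\<bar>) \<in> borel_measurable lborel" unfolding K_def by measurable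
  have 1: "integrable lborel (\<lambda>t. \<bar>K t u\<bar>)"
    using integrable_cong_AE[OF m _ K_abs_ae[of u]] i by simp
  have "(LINT t|lborel. \<bar>K t u\<bar>) = (LINT t|lborel. indicator {0<..<u} t + indicator {u<..<0} t)"
    by (rule integral_cong_AE[OF m _ K_abs_ae]) simp
  also have "\<dots> = measure lborel {0<..<u} + measure lborel {u<..<0}"
    by (subst Bochner_Integration.integral_add) (auto intro!: integrable_real_indicator)
  also have "\<dots> = \<bar>u\<bar>"
    by (cases "u \<ge> 0") auto
  finally show ?thesis using 1 by simp
qed

lemma E_deriv: "w \<noteq> 0 \<Longrightarrow> ((\<lambda>t. E (w * t) / (\<i> * of_real w)) has_vector_derivative E (w * x)) (at x within S)"
proof -
  assume w: "w \<noteq> 0"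
  have d1: "(complex_of_real has_vector_derivative 1) (at x within S)"
    using has_vector_derivative_of_real[OF DERIV_ident[where F="at x within S"]] by simp
  have d2: "((\<lambda>z. exp (\<i> * of_real w * z) / (\<i> * of_real w)) has_field_derivative
      exp (\<i> * of_real w * of_real x)) (at (of_real x) within of_real ` S)"
    using w by (auto intro!: derivative_eq_intros)
  have "((\<lambda>z. exp (\<i> * of_real w * z) / (\<i> * of_real w)) \<circ> complex_of_real has_vector_derivative
      1 * exp (\<i> * of_real w * of_real x)) (at x within S)"
    by (rule field_vector_diff_chain_within[OF d1 d2])
  then show ?thesis by (simp add: o_def mult.assoc)
qed

lemma E_set_integrable: "set_integrable lborel (einterval (ereal a) (ereal b)) (\<lambda>t. E (w * t))"
proof (cases "a \<le> b")
  case True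
  then have "interval_lebesgue_integrable lborel (ereal a) (ereal b) (\<lambda>t. E (w * t))"
    by (intro interval_integrable_continuous_on) (auto intro!: continuous_intros)
  then show ?thesis using True by (simp add: interval_lebesgue_integrable_def)
next
  case False
  then have "einterval (ereal a) (ereal b) = {}" by auto
  then show ?thesis by (simp add: set_integrable_def)
qed

lemma K_FT:
  assumes w: "w \<noteq> 0"
  shows "integrable lborel (\<lambda>t. E (w * t) * of_real (K t u))
     \<and> (LINT t|lborel. E (w * t) * of_real (K t u)) = (E (w * u) - 1) / (\<i> * of_real w)"
proof
  have m: "(\<lambda>t. E (w * t) * of_real (K t u)) \<in> borel_measurable lborel"
    unfolding K_def by measurable
  show "integrable lborel (\<lambda>t. E (w * t) * of_real (K t u))"
    by (rule Bochner_Integration.integrable_bound[OF conjunct1[OF K_abs_int[of u]] m])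
       (simp add: norm_mult)
  have ae: "AE t in lborel. E (w * t) * of_real (K t u)
      = indicator (einterval (ereal 0) (ereal u)) t *\<^sub>R E (w * t)
      - indicator (einterval (ereal u) (ereal 0)) t *\<^sub>R E (w * t)"
    using K_ae[of u] by eventually_elim (auto simp: indicator_def)
  have "(LINT t|lborel. E (w * t) * of_real (K t u))
      = (LINT t|lborel. indicator (einterval (ereal 0) (ereal u)) t *\<^sub>R E (w * t)
      - indicator (einterval (ereal u) (ereal 0)) t *\<^sub>R E (w * t))"
    by (rule integral_cong_AE[OF m _ ae]) (auto simp del: einterval_eq)
  also have "\<dots> = (LINT t:einterval (ereal 0) (ereal u)|lborel. E (w * t))
      - (LINT t:einterval (ereal u) (ereal 0)|lborel. E (w * t))"
    unfolding set_lebesgue_integral_def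
    by (rule Bochner_Integration.integral_diff)
       (use E_set_integrable[of 0 u w] E_set_integrable[of u 0 w] in \<open>auto simp: set_integrable_def simp del: einterval_eq\<close>)
  also have "\<dots> = (LBINT t=ereal 0..ereal u. E (w * t))"
    by (cases "0 \<le> u") (auto simp: interval_lebesgue_integral_def set_lebesgue_integral_def)
  also have "\<dots> = E (w * u) / (\<i> * of_real w) - E (w * 0) / (\<i> * of_real w)"
    by (rule interval_integral_FTC_finite) (auto intro!: continuous_intros E_deriv[OF w] simp del: of_real_mult)
  also have "\<dots> = (E (w * u) - 1) / (\<i> * of_real w)"
    by (simp add: diff_divide_distrib)
  finally show "(LINT t|lborel. E (w * t) * of_real (K t u)) = (E (w * u) - 1) / (\<i> * of_real w)" .
qed

lemma indc: "(indicator S x * (f::complex)) = indicator S x *\<^sub>R f"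
  by (simp add: indicator_def)

lemma c1: fixes A B :: complex assumes "A + B = 1" shows "\<i> / 2 * (1 - (B - A)) = \<i> * A"
proof - have B: "B = 1 - A" using assms by (simp add: algebra_simps eq_diff_eq) show ?thesis unfolding B by (simp add: field_simps) qed
lemma c3: fixes A B :: complex assumes "A + B = 1" shows "\<i> / 2 * (-1 - (B - A)) = - \<i> * B"
proof - have A: "A = 1 - B" using assms by (simp add: algebra_simps eq_diff_eq) show ?thesis unfolding A by (simp add: field_simps) qed
lemma c2: fixes A B :: complex assumes "A + B = 1" shows "1/2 - A = - ((A - B)/2)"
proof - have A: "A = 1 - B" using assms by (simp add: algebra_simps eq_diff_eq) show ?thesis unfolding A by (simp add: field_simps) qed

theorem lemma14:
  fixes g :: "real \<Rightarrow> complex"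
  assumes cont: "continuous_on UNIV g"
    and rapid: "\<And>k::nat. \<exists>C. \<forall>t. \<bar>t\<bar> ^ k * norm (g t) \<le> C"
    and even: "\<And>w. f_hat g (- w) = f_hat g w"
    and zero: "f_hat g 0 = 0"
    and one: "\<And>w. \<bar>w\<bar> \<ge> 1 \<Longrightarrow> f_hat g w = 1"
  shows "(\<forall>t. norm (F_of g t) \<le> norm (f_tail g t))
       \<and> (\<forall>w. w \<noteq> 0 \<longrightarrow> FT (F_of g) w = - f_hat g w / complex_of_real w)"
proof -
  have gm[measurable]: "g \<in> borel_measurable borel"
    using cont by (simp add: borel_measurable_continuous_onI)
  obtain C0 where C0: "\<And>t. \<bar>t\<bar> ^ 0 * norm (g t) \<le> C0" using rapid[of 0] by blast
  obtain C1 where C1: "\<And>t. \<bar>t\<bar> ^ 1 * norm (g t) \<le> C1" using rapid[of 1] by blast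
  obtain C2 where C2: "\<And>t. \<bar>t\<bar> ^ 2 * norm (g t) \<le> C2" using rapid[of 2] by blast
  obtain C3 where C3: "\<And>t. \<bar>t\<bar> ^ 3 * norm (g t) \<le> C3" using rapid[of 3] by blast
  have ig: "integrable lborel g"
    by (rule integrable_by_decay[OF cont, of C0 C2]) (use C0 C2 in auto)
  have iug: "integrable lborel (\<lambda>u. complex_of_real \<bar>u\<bar> * g u)"
  proof (rule integrable_by_decay[of _ C1 C3])
    show "continuous_on UNIV (\<lambda>u. complex_of_real \<bar>u\<bar> * g u)"
      by (intro continuous_intros cont)
    show "norm (complex_of_real \<bar>t\<bar> * g t) \<le> C1" for t using C1[of t] by (simp add: norm_mult)
    show "\<bar>t\<bar>^2 * norm (complex_of_real \<bar>t\<bar> * g t) \<le> C3" for t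
      using C3[of t] by (simp add: norm_mult power3_eq_cube power2_eq_square mult.assoc)
  qed
  have FTg: "FT g w = (LINT x|lborel. g x * E (w * x))" for w
    unfolding FT_def by (simp add: mult.commute)
  have int1: "(LINT x|lborel. g x) = 1"
    using zero unfolding f_hat_def FT_def by simp
  define h where "h x = g (- x)" for x
  have ih: "integrable lborel h"
    unfolding h_def using lborel_integrable_real_affine[OF ig, of "-1" 0] by simp
  have FTh: "(LINT x|lborel. h x * E (w * x)) = (LINT x|lborel. g x * E (w * x))" for w
  proof -
    have "(LINT x|lborel. g x * E ((-w) * x)) = (LINT x|lborel. h x * E (w * x))"
      using lborel_integral_real_affine[of "-1" "\<lambda>x. g x * E ((-w) * x)" 0]
      by (simp add: h_def)
    also have "(LINT x|lborel. g x * E ((-w) * x)) = FT g (-w)" by (simp add: FTg)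
    also have "\<dots> = FT g w" using even[of w] unfolding f_hat_def by simp
    finally show ?thesis by (simp add: FTg)
  qed
  have cdf: "(LINT x|lborel. indicator {..s} x *\<^sub>R h x) = (LINT x|lborel. indicator {..s} x *\<^sub>R g x)" for s
    using fourier_unique_cdf[OF ih ig FTh, of s] by (simp add: indc)
  have ii: "integrable lborel (\<lambda>x. indicator S x *\<^sub>R g x)" if "S \<in> sets borel" for S
    using integrable_mult_indicator[OF _ ig, of S] that by simp
  have part1: "norm (F_of g t) \<le> norm (f_tail g t)" for t
  proof -
    define A where "A = (LINT u|lborel. indicator {t<..} u *\<^sub>R g u)"
    define B where "B = (LINT u|lborel. indicator {..<t} u *\<^sub>R g u)"
    have AB: "A + B = 1"
    proof -
      have "AE u in lborel. g u = indicator {t<..} u *\<^sub>R g u + indicator {..<t} u *\<^sub>R g u"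
        using AE_lborel_singleton[of t] by eventually_elim (auto simp: indicator_def)
      then have "(LINT x|lborel. g x) = (LINT u|lborel. indicator {t<..} u *\<^sub>R g u + indicator {..<t} u *\<^sub>R g u)"
        by (intro integral_cong_AE) auto
      also have "\<dots> = A + B" unfolding A_def B_def
        by (rule Bochner_Integration.integral_add) (auto intro: ii)
      finally show ?thesis using int1 by simp
    qed
    have S: "(LINT u|lborel. g u * complex_of_real (sgn (t - u))) = B - A"
    proof -
      have "(LINT u|lborel. g u * complex_of_real (sgn (t - u)))
          = (LINT u|lborel. indicator {..<t} u *\<^sub>R g u - indicator {t<..} u *\<^sub>R g u)"
        by (rule Bochner_Integration.integral_cong) (auto simp: indicator_def sgn_if)
      also have "\<dots> = B - A" unfolding A_def B_def
        by (rule Bochner_Integration.integral_diff) (auto intro: ii)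
      finally show ?thesis .
    qed
    have tailA: "(LINT u:{t..}|lborel. g u) = A"
    proof -
      have "AE u in lborel. indicator {t..} u *\<^sub>R g u = indicator {t<..} u *\<^sub>R g u"
        using AE_lborel_singleton[of t] by eventually_elim (auto simp: indicator_def)
      then show ?thesis unfolding A_def set_lebesgue_integral_def
        by (intro integral_cong_AE) auto
    qed
    have tailB: "(LINT u:{-t..}|lborel. g u) = B"
    proof -
      have "(LINT u:{-t..}|lborel. g u) = (LINT x|lborel. indicator {-t..} (-x) *\<^sub>R g (-x))"
        unfolding set_lebesgue_integral_def
        using lborel_integral_real_affine[of "-1" "\<lambda>u. indicator {-t..} u *\<^sub>R g u" 0] by simp
      also have "\<dots> = (LINT x|lborel. indicator {..t} x *\<^sub>R h x)"
        by (rule Bochner_Integration.integral_cong) (auto simp: indicator_def h_def)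
      also have "\<dots> = (LINT x|lborel. indicator {..t} x *\<^sub>R g x)" by (rule cdf)
      also have "\<dots> = B"
      proof -
        have "AE u in lborel. indicator {..t} u *\<^sub>R g u = indicator {..<t} u *\<^sub>R g u"
          using AE_lborel_singleton[of t] by eventually_elim (auto simp: indicator_def)
        then show ?thesis unfolding B_def by (intro integral_cong_AE) auto
      qed
      finally show ?thesis .
    qed
    consider "t > 0" | "t = 0" | "t < 0" by linarith
    then show ?thesis
    proof cases
      case 1
      have "F_of g t = \<i> / 2 * (1 - (B - A))" unfolding F_of_def S using 1 by simp
      also have "\<dots> = \<i> * A" using AB by (rule c1)
      finally have "F_of g t = \<i> * A" .
      moreover have "f_tail g t = - A" unfolding f_tail_def using 1 tailA by simp
      ultimately show ?thesis by (simp add: norm_mult)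
    next
      case 2
      have F2: "F_of g t = \<i> * ((A - B) / 2)" unfolding F_of_def S using 2 by simp
      have T2: "f_tail g t = - ((A - B) / 2)" unfolding f_tail_def using 2 tailA c2[OF AB] by simp
      have "norm (F_of g t) = norm (f_tail g t)"
        by (simp only: F2 T2 norm_mult norm_ii mult_1_left norm_minus_cancel)
      then show ?thesis by simp
    next
      case 3
      have "F_of g t = \<i> / 2 * (-1 - (B - A))" unfolding F_of_def S using 3 by simp
      also have "\<dots> = - \<i> * B" using AB by (rule c3)
      finally have "F_of g t = - \<i> * B" .
      moreover have "f_tail g t = - B" unfolding f_tail_def using 3 tailB by simp
      ultimately show ?thesis by (simp add: norm_mult)
    qed
  qed
  have part2: "FT (F_of g) w = - f_hat g w / complex_of_real w" if w: "w \<noteq> 0" for w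
  proof -
    define f where "f u t = \<i> * (g u * of_real (K t u)) * E (w * t)" for u t
    have Fk: "F_of g t = \<i> * (LINT u|lborel. g u * of_real (K t u))" for t
    proof -
      have isg: "integrable lborel (\<lambda>u. g u * complex_of_real (sgn (t - u)))"
        by (rule Bochner_Integration.integrable_bound[OF integrable_norm[OF ig]])
           (auto simp: norm_mult sgn_if)
      have "(LINT u|lborel. g u * of_real (K t u))
          = (LINT u|lborel. (g u * of_real (sgn t) - g u * of_real (sgn (t - u))) / 2)"
        by (rule Bochner_Integration.integral_cong) (auto simp: K_def field_simps)
      also have "\<dots> = ((LINT u|lborel. g u) * of_real (sgn t) - (LINT u|lborel. g u * of_real (sgn (t - u)))) / 2"
        using ig isg by simp
      finally show ?thesis unfolding F_of_def using int1 by simp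
    qed
    have fe: "f u t = (\<i> * g u) * (E (w * t) * of_real (K t u))" for u t
      unfolding f_def by (simp only: mult_ac)
    have inner: "(LINT t|lborel. f u t) = g u * (E (w * u) - 1) / of_real w" for u
    proof -
      have "(LINT t|lborel. f u t) = \<i> * g u * (LINT t|lborel. E (w * t) * of_real (K t u))"
        unfolding fe by (rule integral_mult_right_zero)
      also have "\<dots> = \<i> * g u * ((E (w * u) - 1) / (\<i> * of_real w))"
        using K_FT[OF w, of u] by simp
      finally show ?thesis by simp
    qed
    have fm[measurable]: "(\<lambda>(u, t). f u t) \<in> borel_measurable (lborel \<Otimes>\<^sub>M lborel)"
      unfolding f_def K_def by measurable
    have fi: "integrable (lborel \<Otimes>\<^sub>M lborel) (\<lambda>(u, t). f u t)"
    proof (rule lborel_pair.Fubini_integrable)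
      show "(\<lambda>(u, t). f u t) \<in> borel_measurable (lborel \<Otimes>\<^sub>M lborel)" by (rule fm)
      have "(LINT t|lborel. norm (f u t)) = \<bar>u\<bar> * norm (g u)" for u
      proof -
        have "(LINT t|lborel. norm (f u t)) = (LINT t|lborel. norm (g u) * \<bar>K t u\<bar>)"
          unfolding f_def by (simp add: norm_mult)
        also have "\<dots> = \<bar>u\<bar> * norm (g u)" using K_abs_int[of u] by simp
        finally show ?thesis .
      qed
      then show "integrable lborel (\<lambda>u. LINT t|lborel. norm (case (u, t) of (u, t) \<Rightarrow> f u t))"
        using integrable_norm[OF iug] by (simp add: norm_mult)
      show "AE u in lborel. integrable lborel (\<lambda>t. case (u, t) of (u, t) \<Rightarrow> f u t)"
      proof (rule AE_I2)
        fix u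
        have "integrable lborel (\<lambda>t. (\<i> * g u) * (E (w * t) * of_real (K t u)))"
          using K_FT[OF w, of u] by simp
        then show "integrable lborel (\<lambda>t. case (u, t) of (u, t) \<Rightarrow> f u t)"
          by (simp only: case_prod_conv fe)
      qed
    qed
    have "FT (F_of g) w = (LINT t|lborel. LINT u|lborel. f u t)"
      unfolding FT_def Fk f_def by (simp add: mult.commute mult.left_commute)
    also have "\<dots> = (LINT u|lborel. LINT t|lborel. f u t)"
      by (rule lborel_pair.Fubini_integral) (use fi in simp)
    also have "\<dots> = (LINT u|lborel. (g u * E (w * u) - g u) / of_real w)"
      by (simp add: inner right_diff_distrib)
    also have "\<dots> = ((LINT u|lborel. g u * E (w * u)) - (LINT u|lborel. g u)) / of_real w"
      using integrable_E_mult[OF ig, of w] ig by simp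
    also have "\<dots> = - f_hat g w / of_real w"
      unfolding f_hat_def FTg int1 by (simp add: field_simps)
    finally show ?thesis .
  qed
  show ?thesis using part1 part2 by blast
qed

end
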